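(* Let $T\in L_{aut}(\mathcal B)$ be a shifted hyperbolic operator with transition subspace $E_0=E^-\cap T^{-1}(E^+)$. If $E_0$ is separable (in particular, if $E_0$ is finite dimensional), then $\overline{B(T)}$ is separable.
   Context: $\mathcal B$ is a Banach space. $T$ is generalized hyperbolic if there is a decomposition $\mathcal B=E^-\oplus E^+$ into complementary closed subspaces with $T(E^+)\subset E^+$, $T^{-1}(E^-)\subset E^-$, and $T|_{E^+}$, $T^{-1}|_{E^-}$ uniform contractions; $T$ is shifted hyperbolic if in addition $E_0=E^-\cap T^{-1}(E^+)\ne\{0\}$. $B(T)$ is the set of $x$ for which there exist $K>0$ and strictly increasing sequences of positive integers $(k_n),(m_n)$ with $|T^{k_n}x|<K$ and $|T^{-m_n}x|<K$. *)

theory Defs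
  imports "HOL-Analysis.Analysis"
begin

definition is_aut :: "('a::banach \<Rightarrow> 'a) \<Rightarrow> bool" where
  "is_aut T \<longleftrightarrow> bounded_linear T \<and> bij T \<and> bounded_linear (inv T)"

definition uniform_contraction_on :: "'a set \<Rightarrow> ('a::real_normed_vector \<Rightarrow> 'a) \<Rightarrow> bool" where
  "uniform_contraction_on E S \<longleftrightarrow>
     (\<exists>C t. C > 0 \<and> 0 < t \<and> t < 1 \<and>
        (\<forall>n. \<forall>x\<in>E. norm ((S ^^ n) x) \<le> C * t ^ n * norm x))"

definition gen_hyperbolic_split :: "('a::banach \<Rightarrow> 'a) \<Rightarrow> 'a set \<Rightarrow> 'a set \<Rightarrow> bool" where
  "gen_hyperbolic_split T Em Ep \<longleftrightarrow>
     subspace Em \<and> subspace Ep \<and> closed Em \<and> closed Ep \<and>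
     Em \<inter> Ep = {0} \<and> Em + Ep = UNIV \<and>
     T ` Ep \<subseteq> Ep \<and> inv T ` Em \<subseteq> Em \<and>
     uniform_contraction_on Ep T \<and> uniform_contraction_on Em (inv T)"

definition transition_subspace :: "('a \<Rightarrow> 'a) \<Rightarrow> 'a set \<Rightarrow> 'a set \<Rightarrow> 'a set" where
  "transition_subspace T Em Ep = Em \<inter> T -` Ep"

definition shifted_hyperbolic_split :: "('a::banach \<Rightarrow> 'a) \<Rightarrow> 'a set \<Rightarrow> 'a set \<Rightarrow> bool" where
  "shifted_hyperbolic_split T Em Ep \<longleftrightarrow>
     gen_hyperbolic_split T Em Ep \<and> transition_subspace T Em Ep \<noteq> {0}"

definition bset_of :: "('a::real_normed_vector \<Rightarrow> 'a) \<Rightarrow> 'a set" where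
  "bset_of T = {x. \<exists>K>0. \<exists>(k::nat \<Rightarrow> nat) (m::nat \<Rightarrow> nat).
      strict_mono k \<and> strict_mono m \<and> k 0 > 0 \<and> m 0 > 0 \<and>
      (\<forall>n. norm ((T ^^ k n) x) < K) \<and> (\<forall>n. norm ((inv T ^^ m n) x) < K)}"

end

theory Submission imports Defs begin

lemma bounded_split:
  fixes Em Ep :: "'a::banach set"
  assumes sm: "subspace Em" and sp: "subspace Ep" and cm: "closed Em" and cp: "closed Ep"
    and sum: "Em + Ep = UNIV"
  shows "\<exists>M>0. \<forall>x. \<exists>u\<in>Em. \<exists>s\<in>Ep. x = u + s \<and> norm u \<le> M * norm x"
proof -
  define F where "F n = {u + s | u s. u \<in> Em \<and> s \<in> Ep \<and> norm u \<le> real n \<and> norm s \<le> real n}" for n::nat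
  have cover: "(\<Union>n. closure (F n)) = UNIV"
  proof -
    have "x \<in> (\<Union>n. closure (F n))" for x
    proof -
      from sum obtain u s where us: "u \<in> Em" "s \<in> Ep" "x = u + s"
        unfolding set_plus_def by blast
      obtain n::nat where n: "max (norm u) (norm s) \<le> real n" using real_arch_simple by blast
      have "x \<in> F n" unfolding F_def using us n by auto
      then show ?thesis using closure_subset by blast
    qed
    then show ?thesis by blast
  qed
  have "\<exists>n. interior (closure (F n)) \<noteq> {}"
  proof (rule ccontr)
    assume "\<not> ?thesis"
    hence all: "\<And>n. interior (closure (F n)) = {}" by auto
    have "euclidean interior_of \<Union>(range (\<lambda>n. closure (F n))) = {}"
      by (rule Baire_category_alt) (use completely_metrizable_space_euclidean all in auto)
    with cover show False by simp
  qed
  then obtain n x0 where "x0 \<in> interior (closure (F n))" by blast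
  then obtain r where r: "r > 0" "ball x0 r \<subseteq> closure (F n)" using mem_interior by blast
  have claim1: "\<exists>u\<in>Em. \<exists>s\<in>Ep. norm u \<le> 2*real n \<and> norm s \<le> 2*real n \<and> norm (y - (u+s)) < \<epsilon>"
    if y: "norm y < r" and e: "\<epsilon> > 0" for y \<epsilon>
  proof -
    have "x0 + y \<in> closure (F n)" using r y by (auto simp: dist_norm)
    then obtain p where p: "p \<in> F n" "dist p (x0 + y) < \<epsilon>/2"
      using e closure_approachable[of "x0+y" "F n"] by (meson half_gt_zero)
    have "x0 \<in> closure (F n)" using r by auto
    then obtain q where q: "q \<in> F n" "dist q x0 < \<epsilon>/2"
      using e closure_approachable[of "x0" "F n"] by (meson half_gt_zero)
    from p(1) obtain u1 s1 where 1: "p = u1 + s1" "u1 \<in> Em" "s1 \<in> Ep" "norm u1 \<le> real n" "norm s1 \<le> real n"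
      unfolding F_def by blast
    from q(1) obtain u2 s2 where 2: "q = u2 + s2" "u2 \<in> Em" "s2 \<in> Ep" "norm u2 \<le> real n" "norm s2 \<le> real n"
      unfolding F_def by blast
    show ?thesis
    proof (intro bexI conjI)
      show "u1 - u2 \<in> Em" using 1 2 sm by (simp add: subspace_diff)
      show "s1 - s2 \<in> Ep" using 1 2 sp by (simp add: subspace_diff)
      show "norm (u1 - u2) \<le> 2 * real n" using 1 2 norm_triangle_ineq4[of u1 u2] by linarith
      show "norm (s1 - s2) \<le> 2 * real n" using 1 2 norm_triangle_ineq4[of s1 s2] by linarith
      have "y - ((u1 - u2) + (s1 - s2)) = (x0 + y - p) - (x0 - q)" using 1 2 by (simp add: algebra_simps)
      also have "norm \<dots> \<le> norm (x0 + y - p) + norm (x0 - q)" by (rule norm_triangle_ineq4)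
      also have "\<dots> < \<epsilon>" using p q by (simp add: dist_norm norm_minus_commute)
      finally show "norm (y - ((u1 - u2) + (s1 - s2))) < \<epsilon>" .
    qed
  qed
  define c where "c = 4 * real n / r"
  have c0: "c \<ge> 0" using r by (simp add: c_def)
  have claim2: "\<exists>u. \<exists>s. u \<in> Em \<and> s \<in> Ep \<and> norm u \<le> c * norm y \<and> norm s \<le> c * norm y \<and> norm (y - (u+s)) \<le> norm y / 2" for y
  proof (cases "y = 0")
    case True
    then show ?thesis using sm sp by (intro exI[of _ 0]) (auto simp: subspace_0)
  next
    case False
    define l where "l = r / (2 * norm y)"
    have l0: "l > 0" using False r by (simp add: l_def)
    have "norm (l *\<^sub>R y) = r/2" using False l0 r by (simp add: l_def)
    then have "norm (l *\<^sub>R y) < r" using r by simp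
    from claim1[OF this, of "r/4"] r obtain u s where us: "u \<in> Em" "s \<in> Ep" "norm u \<le> 2*real n" "norm s \<le> 2*real n"
      "norm (l *\<^sub>R y - (u+s)) < r/4" by auto
    have key: "2*real n / l = c * norm y" using False r by (simp add: l_def c_def field_simps)
    show ?thesis
    proof (intro exI conjI)
      show "(1/l) *\<^sub>R u \<in> Em" using us sm by (simp add: subspace_scale)
      show "(1/l) *\<^sub>R s \<in> Ep" using us sp by (simp add: subspace_scale)
      have "norm ((1/l) *\<^sub>R u) = norm u / l" using l0 by simp
      also have "\<dots> \<le> 2*real n / l" using us l0 by (simp add: divide_right_mono)
      finally show "norm ((1/l) *\<^sub>R u) \<le> c * norm y" using key by simp
      have "norm ((1/l) *\<^sub>R s) = norm s / l" using l0 by simp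
      also have "\<dots> \<le> 2*real n / l" using us l0 by (simp add: divide_right_mono)
      finally show "norm ((1/l) *\<^sub>R s) \<le> c * norm y" using key by simp
      have "y - ((1/l) *\<^sub>R u + (1/l) *\<^sub>R s) = (1/l) *\<^sub>R (l *\<^sub>R y - (u+s))"
        using l0 by (simp add: algebra_simps)
      then have "norm (y - ((1/l) *\<^sub>R u + (1/l) *\<^sub>R s)) = norm (l *\<^sub>R y - (u+s)) / l"
        using l0 by simp
      also have "\<dots> \<le> (r/4) / l" using us l0 by (intro divide_right_mono; use us l0 in linarith)
      also have "\<dots> = norm y / 2" using False r by (simp add: l_def field_simps)
      finally show "norm (y - ((1/l) *\<^sub>R u + (1/l) *\<^sub>R s)) \<le> norm y / 2" .
    qed
  qed
  then obtain U S where US: "\<And>y. U y \<in> Em \<and> S y \<in> Ep \<and> norm (U y) \<le> c * norm y \<and> norm (S y) \<le> c * norm y \<and> norm (y - (U y + S y)) \<le> norm y / 2"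
    by metis
  show ?thesis
  proof (intro exI[of _ "2*c+1"] conjI allI)
    show "2*c+1 > 0" using c0 by simp
    fix x
    define yy where "yy = rec_nat x (\<lambda>_ z. z - (U z + S z))"
    have yy0: "yy 0 = x" and yyS: "\<And>j. yy (Suc j) = yy j - (U (yy j) + S (yy j))"
      by (simp_all add: yy_def)
    have bnd: "norm (yy j) \<le> (1/2)^j * norm x" for j
    proof (induction j)
      case 0 then show ?case by (simp add: yy0)
    next
      case (Suc j)
      have "norm (yy (Suc j)) \<le> norm (yy j) / 2" using US[of "yy j"] by (simp add: yyS)
      also have "\<dots> \<le> (1/2)^j * norm x / 2" using Suc by simp
      finally show ?case by simp
    qed
    have gs: "summable (\<lambda>j. (c * norm x) * (1/2)^j)"
      by (intro summable_mult) (simp add: summable_geometric)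
    have nU: "norm (U (yy j)) \<le> (c * norm x) * (1/2)^j" for j
    proof -
      have "norm (U (yy j)) \<le> c * norm (yy j)" using US by blast
      also have "\<dots> \<le> c * ((1/2)^j * norm x)" using bnd c0 by (simp add: mult_left_mono)
      finally show ?thesis by (simp add: algebra_simps)
    qed
    have nS: "norm (S (yy j)) \<le> (c * norm x) * (1/2)^j" for j
    proof -
      have "norm (S (yy j)) \<le> c * norm (yy j)" using US by blast
      also have "\<dots> \<le> c * ((1/2)^j * norm x)" using bnd c0 by (simp add: mult_left_mono)
      finally show ?thesis by (simp add: algebra_simps)
    qed
    have sU: "summable (\<lambda>j. norm (U (yy j)))"
      by (rule summable_comparison_test[OF _ gs]) (use nU in auto)
    have sS: "summable (\<lambda>j. norm (S (yy j)))"
      by (rule summable_comparison_test[OF _ gs]) (use nS in auto)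
    have sU': "summable (\<lambda>j. U (yy j))" by (rule summable_norm_cancel[OF sU])
    have sS': "summable (\<lambda>j. S (yy j))" by (rule summable_norm_cancel[OF sS])
    define u where "u = (\<Sum>j. U (yy j))"
    define s where "s = (\<Sum>j. S (yy j))"
    have uE: "u \<in> Em"
    proof -
      have "(\<lambda>N. \<Sum>j<N. U (yy j)) \<longlonglongrightarrow> u" using sU' by (simp add: u_def summable_LIMSEQ)
      moreover have "\<forall>N. (\<Sum>j<N. U (yy j)) \<in> Em" by (intro allI subspace_sum[OF sm]) (use US in blast)
      ultimately show ?thesis using closed_sequentially[OF cm, of "\<lambda>N. \<Sum>j<N. U (yy j)" u] by blast
    qed
    have sE: "s \<in> Ep"
    proof -
      have "(\<lambda>N. \<Sum>j<N. S (yy j)) \<longlonglongrightarrow> s" using sS' by (simp add: s_def summable_LIMSEQ)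
      moreover have "\<forall>N. (\<Sum>j<N. S (yy j)) \<in> Ep" by (intro allI subspace_sum[OF sp]) (use US in blast)
      ultimately show ?thesis using closed_sequentially[OF cp, of "\<lambda>N. \<Sum>j<N. S (yy j)" s] by blast
    qed
    have s1: "(\<lambda>j. U (yy j) + S (yy j)) sums (u + s)"
      unfolding u_def s_def by (intro sums_add summable_sums sU' sS')
    have yy_lim: "yy \<longlonglongrightarrow> 0"
    proof (rule Lim_null_comparison)
      show "\<forall>\<^sub>F j in sequentially. norm (yy j) \<le> (1/2)^j * norm x" using bnd by simp
      show "(\<lambda>j. (1/2::real)^j * norm x) \<longlonglongrightarrow> 0"
        by (intro tendsto_mult_left_zero LIMSEQ_power_zero) simp
    qed
    have s2: "(\<lambda>j. U (yy j) + S (yy j)) sums x"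
    proof -
      have "(\<Sum>j<N. U (yy j) + S (yy j)) = x - yy N" for N
      proof -
        have "(\<Sum>j<N. U (yy j) + S (yy j)) = (\<Sum>j<N. yy j - yy (Suc j))" by (simp add: yyS add.commute)
        also have "\<dots> = x - yy N" by (simp add: sum_lessThan_telescope' yy0)
        finally show ?thesis .
      qed
      moreover have "(\<lambda>N. x - yy N) \<longlonglongrightarrow> x - 0" by (intro tendsto_diff tendsto_const yy_lim)
      ultimately show ?thesis unfolding sums_def by simp
    qed
    have xus: "x = u + s" using sums_unique[OF s1] sums_unique[OF s2] by simp
    have "norm u \<le> (\<Sum>j. norm (U (yy j)))" unfolding u_def using summable_norm[OF sU] .
    also have "\<dots> \<le> (\<Sum>j. (c * norm x) * (1/2)^j)" by (rule suminf_le[OF nU sU gs])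
    also have "\<dots> = (c * norm x) * 2"
      by (simp add: suminf_mult summable_geometric suminf_geometric)
    also have "\<dots> \<le> (2*c+1) * norm x" by (simp add: algebra_simps)
    finally show "\<exists>u\<in>Em. \<exists>s\<in>Ep. x = u + s \<and> norm u \<le> (2*c+1) * norm x"
      using uE sE xus by blast
  qed
qed


lemma funpow_bl: fixes f :: "'a::real_normed_vector \<Rightarrow> 'a" shows "bounded_linear f \<Longrightarrow> bounded_linear (f^^n)"
proof (induction n)
  case 0
  have "(f^^0) = (\<lambda>x. x)" by (rule ext) simp
  then show ?case using bounded_linear_ident[where 'a='a] by metis
next
  case (Suc n)
  have "(f^^Suc n) = (\<lambda>x. f ((f^^n) x))" by (rule ext) simp
  then show ?case using bounded_linear_compose[OF Suc(2) Suc(1)[OF Suc(2)]] by simp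
qed

lemma funpow_inv_id:
  fixes f g :: "'a \<Rightarrow> 'a"
  assumes fg: "\<And>x. f (g x) = x" shows "(f^^n) ((g^^n) x) = x"
proof (induction n arbitrary: x)
  case 0 then show ?case by simp
next
  case (Suc n)
  have g1: "(g^^Suc n) x = g ((g^^n) x)" by simp
  have f1: "(f^^Suc n) y = (f^^n) (f y)" for y by (simp add: funpow_swap1)
  have "(f^^Suc n) ((g^^Suc n) x) = (f^^n) (f (g ((g^^n) x)))"
    by (simp only: g1 f1)
  also have "\<dots> = x" using fg Suc by simp
  finally show ?case .
qed

lemma funpow_set: fixes f :: "'a \<Rightarrow> 'a" shows "f ` A \<subseteq> A \<Longrightarrow> x \<in> A \<Longrightarrow> (f^^n) x \<in> A"
  by (induction n) auto

definition sepset :: "'a::metric_space set \<Rightarrow> bool" where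
  "sepset A \<longleftrightarrow> (\<exists>D. countable D \<and> D \<subseteq> A \<and> A \<subseteq> closure D)"

lemma sep_image:
  assumes "sepset A" "continuous_on UNIV f"
  shows "sepset (f ` A)"
proof -
  obtain D where D: "countable D" "D \<subseteq> A" "A \<subseteq> closure D" using assms(1) sepset_def by blast
  have "f ` closure D \<subseteq> closure (f ` D)"
  proof (rule image_closure_subset)
    show "continuous_on (closure D) f" using continuous_on_subset[OF assms(2)] by blast
    show "f ` D \<subseteq> closure (f ` D)" by (rule closure_subset)
  qed simp
  then show ?thesis unfolding sepset_def using D
    by (intro exI[of _ "f ` D"]) auto
qed

lemma sep_plus:
  fixes A B :: "'a::real_normed_vector set"
  assumes "sepset A" "sepset B"
  shows "sepset (A + B)"
proof -
  obtain D where D: "countable D" "D \<subseteq> A" "A \<subseteq> closure D" using assms(1) sepset_def by blast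
  obtain E where E: "countable E" "E \<subseteq> B" "B \<subseteq> closure E" using assms(2) sepset_def by blast
  have "D + E = (\<lambda>p. fst p + snd p) ` (D \<times> E)" unfolding set_plus_def by force
  then have "countable (D + E)" using D E by simp
  moreover have "D + E \<subseteq> A + B" using D E by (simp add: set_plus_mono2)
  moreover have "A + B \<subseteq> closure (D + E)"
    using set_plus_mono2[OF D(3) E(3)] closure_sum[of D E] by blast
  ultimately show ?thesis unfolding sepset_def by blast
qed

lemma sep_UN:
  assumes "countable I" "\<And>i. i \<in> I \<Longrightarrow> sepset (A i)"
  shows "sepset (\<Union>i\<in>I. A i)"
proof -
  from assms(2) have "\<forall>i\<in>I. \<exists>D. countable D \<and> D \<subseteq> A i \<and> A i \<subseteq> closure D" unfolding sepset_def by blast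
  then obtain D where D: "\<And>i. i \<in> I \<Longrightarrow> countable (D i) \<and> D i \<subseteq> A i \<and> A i \<subseteq> closure (D i)" by metis
  have "countable (\<Union>i\<in>I. D i)" using D assms(1) by blast
  moreover have "(\<Union>i\<in>I. D i) \<subseteq> (\<Union>i\<in>I. A i)" using D by blast
  moreover have "(\<Union>i\<in>I. A i) \<subseteq> closure (\<Union>i\<in>I. D i)"
  proof -
    have "A i \<subseteq> closure (\<Union>i\<in>I. D i)" if "i \<in> I" for i
      using D[OF that] closure_mono[of "D i" "\<Union>i\<in>I. D i"] that by blast
    then show ?thesis by blast
  qed
  ultimately show ?thesis unfolding sepset_def by blast
qed

lemma sep_zero: "sepset {0::'a::real_normed_vector}"
  unfolding sepset_def by (intro exI[of _ "{0}"]) auto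

lemma contr_bound:
  assumes "uniform_contraction_on E f"
  obtains C t where "C > 0" "0 < t" "t < 1" "\<And>n x. x \<in> E \<Longrightarrow> norm ((f^^n) x) \<le> C * t^n * norm x"
    "\<And>n x. x \<in> E \<Longrightarrow> norm ((f^^n) x) \<le> C * norm x"
proof -
  obtain C t where Ct: "C > 0" "0 < t" "t < 1" "\<And>n x. x \<in> E \<Longrightarrow> norm ((f^^n) x) \<le> C * t^n * norm x"
    using assms unfolding uniform_contraction_on_def by blast
  have "norm ((f^^n) x) \<le> C * norm x" if "x \<in> E" for n x
  proof -
    have "C * t^n * norm x \<le> C * 1 * norm x"
      using Ct by (intro mult_right_mono mult_left_mono power_le_one) auto
    then show ?thesis using Ct(4)[OF that, of n] by simp
  qed
  then show ?thesis using that Ct by blast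
qed


theorem mainTheorem20:
  fixes T :: "'a::banach \<Rightarrow> 'a" and Em Ep :: "'a set"
  assumes "is_aut T"
    and "shifted_hyperbolic_split T Em Ep"
    and "separable_space (subtopology euclidean (transition_subspace T Em Ep))"
  shows "separable_space (subtopology euclidean (closure (bset_of T)))"
proof -
  define S where "S = inv T"
  have blT: "bounded_linear T" and bij: "bij T" and blS: "bounded_linear S"
    using assms(1) by (auto simp: is_aut_def S_def)
  have TS: "T (S x) = x" for x using bij by (simp add: S_def bij_is_surj surj_f_inv_f)
  have ST: "S (T x) = x" for x using bij by (simp add: S_def bij_is_inj inv_f_f)
  have gh: "gen_hyperbolic_split T Em Ep" and E0ne: "transition_subspace T Em Ep \<noteq> {0}"
    using assms(2) by (auto simp: shifted_hyperbolic_split_def)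
  have sm: "subspace Em" and sp: "subspace Ep" and cm: "closed Em" and cp: "closed Ep"
    and int0: "Em \<inter> Ep = {0}" and plus: "Em + Ep = UNIV" and TEp: "T ` Ep \<subseteq> Ep" and SEm: "S ` Em \<subseteq> Em"
    and ucp: "uniform_contraction_on Ep T" and ucm: "uniform_contraction_on Em S"
    using gh by (auto simp: gen_hyperbolic_split_def S_def)
  define E0 where "E0 = transition_subspace T Em Ep"
  have E0: "E0 = Em \<inter> T -` Ep" by (simp add: E0_def transition_subspace_def)
  have decomp: "\<exists>u\<in>Em. \<exists>s\<in>Ep. x = u + s" for x
    using plus unfolding set_plus_def by blast
  have blTn: "bounded_linear (T^^n)" for n using funpow_bl[OF blT] .
  have blSn: "bounded_linear (S^^n)" for n using funpow_bl[OF blS] .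
  have contT: "continuous_on UNIV T" using blT linear_continuous_on by blast
  have contS: "continuous_on UNIV (S^^n)" for n using blSn linear_continuous_on by blast
  have sepE0: "sepset E0"
  proof -
    from assms(3) obtain C where C: "countable C" "C \<subseteq> E0" "subtopology euclidean E0 closure_of C = E0"
      unfolding separable_space_def E0_def by auto
    then have "E0 \<inter> closure C = E0" using closure_of_subtopology[of euclidean E0 C]
      by (simp add: Int_absorb1)
    then show ?thesis unfolding sepset_def using C by blast
  qed
  define H where "H N = {z \<in> Ep. (S^^N) z \<in> Em}" for N
  have H0: "H 0 = {0}" using int0 sp unfolding H_def by (auto simp: subspace_0)
  have HS: "H (Suc N) = T ` H N + T ` E0" for N
  proof
    show "H (Suc N) \<subseteq> T ` H N + T ` E0"
    proof
      fix z assume z: "z \<in> H (Suc N)"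
      then have zp: "z \<in> Ep" and zm: "(S^^Suc N) z \<in> Em" by (auto simp: H_def)
      obtain e s where es: "e \<in> Em" "s \<in> Ep" "S z = e + s" using decomp by blast
      have "z = T e + T s" using TS[of z] es(3) linear_add[OF bounded_linear.linear[OF blT]] by metis
      then have Te: "T e = z - T s" by simp
      have "T s \<in> Ep" using TEp es by blast
      then have "T e \<in> Ep" using Te zp sp by (simp add: subspace_diff)
      then have eE0: "e \<in> E0" using es E0 by blast
      have "(S^^N) s = (S^^N) (S z) - (S^^N) e" using es(3) linear_add[OF bounded_linear.linear[OF blSn]] by simp
      also have "(S^^N) (S z) = (S^^Suc N) z" by (simp add: funpow_swap1)
      finally have "(S^^N) s \<in> Em" using zm funpow_set[OF SEm es(1)] sm by (simp add: subspace_diff)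
      then have "s \<in> H N" using es by (simp add: H_def)
      then show "z \<in> T ` H N + T ` E0" using \<open>z = T e + T s\<close> eE0
        by (metis add.commute imageI set_plus_intro)
    qed
    show "T ` H N + T ` E0 \<subseteq> H (Suc N)"
    proof
      fix w assume "w \<in> T ` H N + T ` E0"
      then obtain s e where se: "s \<in> H N" "e \<in> E0" "w = T s + T e"
        by (auto elim!: set_plus_elim)
      have "T s \<in> Ep" using se TEp by (auto simp: H_def)
      moreover have "T e \<in> Ep" using se E0 by auto
      ultimately have wp: "w \<in> Ep" using se sp by (simp add: subspace_add)
      have "S w = s + e" using se(3) ST linear_add[OF bounded_linear.linear[OF blS]] by metis
      moreover have "(S^^Suc N) w = (S^^N) (S w)" by (simp add: funpow_swap1)
      ultimately have "(S^^Suc N) w = (S^^N) s + (S^^N) e"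
        using linear_add[OF bounded_linear.linear[OF blSn]] by simp
      moreover have "(S^^N) s \<in> Em" using se by (simp add: H_def)
      moreover have "(S^^N) e \<in> Em" using se E0 funpow_set[OF SEm] by blast
      ultimately have "(S^^Suc N) w \<in> Em" using sm by (simp add: subspace_add)
      then show "w \<in> H (Suc N)" using wp by (simp add: H_def)
    qed
  qed
  have sepH: "sepset (H N)" for N
  proof (induction N)
    case 0 then show ?case using H0 sep_zero by simp
  next
    case (Suc N)
    then show ?case unfolding HS
      by (intro sep_plus sep_image sepE0 contT)
  qed
  define G where "G k m = {y. (T^^k) y \<in> Ep \<and> (S^^m) y \<in> Em}" for k m
  have GH: "G k m = (S^^k) ` H (m + k)" for k m
  proof
    show "G k m \<subseteq> (S^^k) ` H (m + k)"
    proof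
      fix y assume "y \<in> G k m"
      then have y: "(T^^k) y \<in> Ep" "(S^^m) y \<in> Em" by (auto simp: G_def)
      have "(S^^(m+k)) ((T^^k) y) = (S^^m) y" using funpow_inv_id[of S T, OF ST] by (simp add: funpow_add)
      then have "(T^^k) y \<in> H (m+k)" using y by (simp add: H_def)
      moreover have "y = (S^^k) ((T^^k) y)" using funpow_inv_id[of S T, OF ST] by simp
      ultimately show "y \<in> (S^^k) ` H (m + k)" by blast
    qed
    show "(S^^k) ` H (m + k) \<subseteq> G k m"
    proof
      fix y assume "y \<in> (S^^k) ` H (m + k)"
      then obtain z where z: "z \<in> H (m+k)" "y = (S^^k) z" by blast
      have "(T^^k) y = z" using z funpow_inv_id[of T S, OF TS] by simp
      moreover have "(S^^m) y = (S^^(m+k)) z" using z by (simp add: funpow_add)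
      ultimately show "y \<in> G k m" using z by (simp add: G_def H_def)
    qed
  qed
  define U where "U = (\<Union>p\<in>UNIV. G (fst p) (snd p))"
  have sepU: "sepset U" unfolding U_def
    by (intro sep_UN) (auto simp: GH intro: sep_image contS sepH)
  obtain C1 t1 where C1: "C1 > 0" "0 < t1" "t1 < 1"
    "\<And>n x. x \<in> Ep \<Longrightarrow> norm ((T^^n) x) \<le> C1 * t1^n * norm x"
    "\<And>n x. x \<in> Ep \<Longrightarrow> norm ((T^^n) x) \<le> C1 * norm x"
    using contr_bound[OF ucp] by metis
  obtain C2 t2 where C2: "C2 > 0" "0 < t2" "t2 < 1"
    "\<And>n x. x \<in> Em \<Longrightarrow> norm ((S^^n) x) \<le> C2 * t2^n * norm x"
    "\<And>n x. x \<in> Em \<Longrightarrow> norm ((S^^n) x) \<le> C2 * norm x"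
    using contr_bound[OF ucm] by metis
  have bset: "bset_of T = {x. \<exists>K>0. \<exists>(k::nat \<Rightarrow> nat) (m::nat \<Rightarrow> nat).
      strict_mono k \<and> strict_mono m \<and> k 0 > 0 \<and> m 0 > 0 \<and>
      (\<forall>n. norm ((T ^^ k n) x) < K) \<and> (\<forall>n. norm ((S ^^ m n) x) < K)}"
    by (simp add: bset_of_def S_def)
  have UB: "U \<subseteq> bset_of T"
  proof
    fix y assume "y \<in> U"
    then obtain k m where y: "(T^^k) y \<in> Ep" "(S^^m) y \<in> Em" by (auto simp: U_def G_def)
    define K where "K = C1 * norm ((T^^k) y) + C2 * norm ((S^^m) y) + 1"
    have K0: "K > 0" using C1 C2 by (simp add: K_def add_nonneg_pos)
    have f: "norm ((T ^^ (n + k + 1)) y) < K" for n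
    proof -
      have "(T ^^ (n + k + 1)) y = (T^^(n+1)) ((T^^k) y)" by (simp add: funpow_add)
      then have "norm ((T ^^ (n + k + 1)) y) \<le> C1 * norm ((T^^k) y)" using C1(5)[OF y(1), of "n+1"] by (simp only:)
      then show ?thesis using C2 unfolding K_def by (smt (verit) mult_nonneg_nonneg norm_ge_zero)
    qed
    have b: "norm ((S ^^ (n + m + 1)) y) < K" for n
    proof -
      have "(S ^^ (n + m + 1)) y = (S^^(n+1)) ((S^^m) y)" by (simp add: funpow_add)
      then have "norm ((S ^^ (n + m + 1)) y) \<le> C2 * norm ((S^^m) y)" using C2(5)[OF y(2), of "n+1"] by (simp only:)
      then show ?thesis using C1 unfolding K_def by (smt (verit) mult_nonneg_nonneg norm_ge_zero)
    qed
    have sm1: "strict_mono (\<lambda>n. n + k + 1)" "strict_mono (\<lambda>n. n + m + 1)" by (auto simp: strict_mono_def)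
    show "y \<in> bset_of T" unfolding bset using K0 f b sm1
      by (intro CollectI exI[of _ K] conjI exI[of _ "\<lambda>n. n + k + 1"] exI[of _ "\<lambda>n. n + m + 1"]) auto
  qed
  obtain M where M: "M > 0" "\<And>x. \<exists>u\<in>Em. \<exists>s\<in>Ep. x = u + s \<and> norm u \<le> M * norm x"
    using bounded_split[OF sm sp cm cp plus] by blast
  have BU: "bset_of T \<subseteq> closure U"
  proof
    fix x assume "x \<in> bset_of T"
    then obtain K kk mm where K: "K > 0" "strict_mono kk" "strict_mono mm"
      "\<And>n::nat. norm ((T ^^ kk n) x) < K" "\<And>n::nat. norm ((S ^^ mm n) x) < K"
      unfolding bset mem_Collect_eq by metis
    show "x \<in> closure U"
    proof (unfold closure_approachable, intro allI impI)
      fix e :: real assume e: "e > 0"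
      define A where "A = C2 * M * K"
      define Bc where "Bc = C1 * (M + 1) * K"
      have A0: "A \<ge> 0" "Bc \<ge> 0" using C1 C2 M K by (auto simp: A_def Bc_def)
      obtain n1 where n1: "t2 ^ n1 < e / (2 * (A + 1))"
        using real_arch_pow_inv[of "e / (2 * (A + 1))" t2] e A0 C2 by auto
      obtain n2 where n2: "t1 ^ n2 < e / (2 * (Bc + 1))"
        using real_arch_pow_inv[of "e / (2 * (Bc + 1))" t1] e A0 C1 by auto
      define n where "n = max n1 n2"
      define a' where "a' = kk n"
      define b' where "b' = mm n"
      have "n \<le> a'" using K(2) seq_suble unfolding a'_def by blast
      then have ta: "t2 ^ a' \<le> t2 ^ n1" using C2 by (intro power_decreasing) (auto simp: n_def)
      have "n \<le> b'" using K(3) seq_suble unfolding b'_def by blast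
      then have tb: "t1 ^ b' \<le> t1 ^ n2" using C1 by (intro power_decreasing) (auto simp: n_def)
      obtain u s where us: "u \<in> Em" "s \<in> Ep" "(T^^a') x = u + s" "norm u \<le> M * norm ((T^^a') x)"
        using M(2) by blast
      have nu: "norm u \<le> M * K" using us(4) K(4)[of n] M(1) unfolding a'_def
        by (smt (verit) mult_left_mono)
      obtain v w where vw: "v \<in> Em" "w \<in> Ep" "(S^^b') x = v + w" "norm v \<le> M * norm ((S^^b') x)"
        using M(2) by blast
      have nv: "norm v \<le> M * K" using vw(4) K(5)[of n] M(1) unfolding b'_def
        by (smt (verit) mult_left_mono)
      have nw: "norm w \<le> (M + 1) * K"
      proof -
        have "w = (S^^b') x - v" using vw(3) by simp
        then have "norm w \<le> norm ((S^^b') x) + norm v" using norm_triangle_ineq4 by metis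
        then show ?thesis using nv K(5)[of n] unfolding b'_def by (simp add: algebra_simps)
      qed
      define a where "a = (S^^a') u"
      define b where "b = (T^^b') w"
      have na: "norm a < e/2"
      proof -
        have "norm a \<le> C2 * t2^a' * norm u" using C2(4)[OF us(1)] by (simp add: a_def)
        also have "\<dots> \<le> C2 * t2^a' * (M * K)" using nu C2 by (intro mult_left_mono) auto
        also have "\<dots> = A * t2^a'" by (simp add: A_def algebra_simps)
        also have "\<dots> \<le> (A + 1) * t2^n1" using A0 ta C2 by (intro mult_mono) auto
        also have "\<dots> < (A + 1) * (e / (2 * (A + 1)))" using n1 A0 by (intro mult_strict_left_mono) auto
        also have "\<dots> = e/2" using A0 by (simp add: field_simps)
        finally show ?thesis .
      qed
      have nb: "norm b < e/2"
      proof -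
        have "norm b \<le> C1 * t1^b' * norm w" using C1(4)[OF vw(2)] by (simp add: b_def)
        also have "\<dots> \<le> C1 * t1^b' * ((M + 1) * K)" using nw C1 by (intro mult_left_mono) auto
        also have "\<dots> = Bc * t1^b'" by (simp add: Bc_def algebra_simps)
        also have "\<dots> \<le> (Bc + 1) * t1^n2" using A0 tb C1 by (intro mult_mono) auto
        also have "\<dots> < (Bc + 1) * (e / (2 * (Bc + 1)))" using n2 A0 by (intro mult_strict_left_mono) auto
        also have "\<dots> = e/2" using A0 by (simp add: field_simps)
        finally show ?thesis .
      qed
      define y where "y = x - a - b"
      have "(T^^a') y = (T^^a') x - (T^^a') a - (T^^a') b"
        by (simp add: y_def linear_diff[OF bounded_linear.linear[OF blTn]])
      also have "(T^^a') a = u" using funpow_inv_id[of T S, OF TS] by (simp add: a_def)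
      also have "(T^^a') b = (T^^(a'+b')) w" by (simp add: b_def funpow_add)
      finally have "(T^^a') y = s - (T^^(a'+b')) w" using us(3) by simp
      moreover have "(T^^(a'+b')) w \<in> Ep" using funpow_set[OF TEp vw(2)] .
      ultimately have y1: "(T^^a') y \<in> Ep" using us(2) sp by (simp add: subspace_diff)
      have "(S^^b') y = (S^^b') x - (S^^b') a - (S^^b') b"
        by (simp add: y_def linear_diff[OF bounded_linear.linear[OF blSn]])
      also have "(S^^b') b = w" using funpow_inv_id[of S T, OF ST] by (simp add: b_def)
      also have "(S^^b') a = (S^^(b'+a')) u" by (simp add: a_def funpow_add)
      finally have "(S^^b') y = v - (S^^(b'+a')) u" using vw(3) by simp
      moreover have "(S^^(b'+a')) u \<in> Em" using funpow_set[OF SEm us(1)] .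
      ultimately have y2: "(S^^b') y \<in> Em" using vw(1) sm by (simp add: subspace_diff)
      have yU: "y \<in> U" using y1 y2 unfolding U_def G_def by auto
      have "dist y x = norm (a + b)" using norm_minus_cancel[of "a + b"] by (simp add: y_def dist_norm algebra_simps)
      also have "\<dots> \<le> norm a + norm b" by (rule norm_triangle_ineq)
      also have "\<dots> < e" using na nb by simp
      finally show "\<exists>y\<in>U. dist y x < e" using yU by blast
    qed
  qed
  have cl: "closure (bset_of T) = closure U"
  proof
    show "closure (bset_of T) \<subseteq> closure U" using BU by (simp add: closure_minimal)
    show "closure U \<subseteq> closure (bset_of T)" using UB by (rule closure_mono)
  qed
  obtain D where D: "countable D" "D \<subseteq> U" "U \<subseteq> closure D" using sepU sepset_def by blast
  have "closure U \<subseteq> closure D" using D(3) by (simp add: closure_minimal)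
  moreover have "closure D \<subseteq> closure U" using D(2) by (rule closure_mono)
  ultimately have cD: "closure U = closure D" by blast
  show ?thesis unfolding cl separable_space_def
  proof (intro exI[of _ D] conjI)
    show "countable D" by (rule D(1))
    show "D \<subseteq> topspace (subtopology euclidean (closure U))" using D(2) closure_subset by auto
    have "closure U \<inter> D = D" using D(2) closure_subset by blast
    then show "subtopology euclidean (closure U) closure_of D = topspace (subtopology euclidean (closure U))"
      by (simp add: closure_of_subtopology cD)
  qed
qed

end
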